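(* The $k$ poles of a $k$-oriented Spherical Diagram do not all lie on a common great circle. Consequently, every attractor hull of a $k$-oriented SD has non-empty interior.
   Context: A geodesic arc on the unit sphere in $\mathbb R^3$ is the unique shortest curve joining two non-antipodal points. An arc $a$ blocks an arc $b$ (equivalently, $b$ hits $a$) if an endpoint of $b$ lies in the relative interior of $a$. A Spherical Diagram (SD) is a finite non-empty collection $\mathcal D$ of pairwise interior-disjoint geodesic arcs on the unit sphere such that each arc of $\mathcal D$ is blocked by arcs of $\mathcal D$ at each of its endpoints. An SD $\mathcal D$ is $k$-oriented if there exist a set $P$ of $k$ points on the unit sphere (poles), no two antipodal, and a function $f\colon\mathcal D\to P$ such that each arc $a\in\mathcal D$ lies on a great circle through $f(a)$ but contains neither $f(a)$ nor its antipode $-f(a)$ (the anti-pole of $f(a)$). An attractor of a $k$-oriented SD is a set of $k$ points, no two antipodal, chosen among its poles and anti-poles (i.e., one from each pair $\{p,-p\}$, $p\in P$). An attractor hull is the spherical convex hull of an attractor (which is the whole sphere if the attractor is not contained in any open hemisphere). *)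

theory Defs
  imports "HOL-Analysis.Analysis"
begin

type_synonym pt = "real^3"

abbreviation S2 :: "pt set" where "S2 \<equiv> sphere 0 1"

text \<open>An arc is represented by its ordered pair of endpoints (a, b); it is a valid
geodesic arc if a, b lie on the unit sphere, are distinct and not antipodal.\<close>
definition valid_arc :: "pt \<times> pt \<Rightarrow> bool" where
  "valid_arc ab \<longleftrightarrow> fst ab \<in> S2 \<and> snd ab \<in> S2 \<and> fst ab \<noteq> snd ab \<and> fst ab \<noteq> - snd ab"

text \<open>Point set of the (shortest) geodesic arc: central projection of the chord.\<close>
definition arc_set :: "pt \<times> pt \<Rightarrow> pt set" where
  "arc_set ab = {sgn ((1 - t) *\<^sub>R fst ab + t *\<^sub>R snd ab) | t. 0 \<le> t \<and> t \<le> 1}"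

definition arc_relint :: "pt \<times> pt \<Rightarrow> pt set" where
  "arc_relint ab = {sgn ((1 - t) *\<^sub>R fst ab + t *\<^sub>R snd ab) | t. 0 < t \<and> t < 1}"

definition blocks :: "pt \<times> pt \<Rightarrow> pt \<times> pt \<Rightarrow> bool" where
  "blocks a b \<longleftrightarrow> fst b \<in> arc_relint a \<or> snd b \<in> arc_relint a"

definition spherical_diagram :: "(pt \<times> pt) set \<Rightarrow> bool" where
  "spherical_diagram D \<longleftrightarrow>
     finite D \<and> D \<noteq> {} \<and> (\<forall>a\<in>D. valid_arc a) \<and>
     (\<forall>a\<in>D. \<forall>b\<in>D. a \<noteq> b \<longrightarrow> arc_relint a \<inter> arc_relint b = {}) \<and>
     (\<forall>a\<in>D. (\<exists>b\<in>D. fst a \<in> arc_relint b) \<and> (\<exists>b\<in>D. snd a \<in> arc_relint b))"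

definition great_circle :: "pt \<Rightarrow> pt set" where
  "great_circle n = {x \<in> S2. n \<bullet> x = 0}"

definition oriented_by :: "(pt \<times> pt) set \<Rightarrow> nat \<Rightarrow> pt set \<Rightarrow> (pt \<times> pt \<Rightarrow> pt) \<Rightarrow> bool" where
  "oriented_by D k P f \<longleftrightarrow>
     finite P \<and> card P = k \<and> P \<subseteq> S2 \<and> (\<forall>p\<in>P. - p \<notin> P) \<and>
     (\<forall>a\<in>D. f a \<in> P \<and>
        (\<exists>n. n \<noteq> 0 \<and> arc_set a \<subseteq> great_circle n \<and> f a \<in> great_circle n) \<and>
        f a \<notin> arc_set a \<and> - f a \<notin> arc_set a)"

definition k_oriented :: "nat \<Rightarrow> (pt \<times> pt) set \<Rightarrow> bool" where
  "k_oriented k D \<longleftrightarrow> spherical_diagram D \<and> (\<exists>P f. oriented_by D k P f)"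

definition attractor :: "pt set \<Rightarrow> pt set \<Rightarrow> bool" where
  "attractor P A \<longleftrightarrow> A \<subseteq> P \<union> uminus ` P \<and> (\<forall>p\<in>P. (p \<in> A) \<noteq> (- p \<in> A))"

definition in_open_hemisphere :: "pt set \<Rightarrow> bool" where
  "in_open_hemisphere A \<longleftrightarrow> (\<exists>n. \<forall>x\<in>A. n \<bullet> x > 0)"

definition spherical_hull :: "pt set \<Rightarrow> pt set" where
  "spherical_hull A = (if in_open_hemisphere A
     then S2 \<inter> {t *\<^sub>R y | t y. t > 0 \<and> y \<in> convex hull A} else S2)"

definition sphere_interior :: "pt set \<Rightarrow> pt set" where
  "sphere_interior H = (subtopology euclidean S2) interior_of H"

end

theory Submission
  imports Defs "HOL-Analysis.Cross3"
begin
unbundle cross3_syntax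

lemma id1: "(x::real^3) \<times> (y \<times> z) = (x \<bullet> z) *\<^sub>R y - (x \<bullet> y) *\<^sub>R z"
  by (simp add: cross3_simps forall_3)
lemma id2: "((b1 \<times> b2) \<bullet> (b1 \<times> b2)) *\<^sub>R (a::real^3) = ((a \<times> b2) \<bullet> (b1 \<times> b2)) *\<^sub>R b1 + ((b1 \<times> a) \<bullet> (b1 \<times> b2)) *\<^sub>R b2 + (a \<bullet> (b1 \<times> b2)) *\<^sub>R (b1 \<times> b2)"
  by (simp add: cross3_simps forall_3)
lemma id4: "(x \<bullet> (y \<times> z)) *\<^sub>R (r::real^3) = (r \<bullet> (y \<times> z)) *\<^sub>R x + (r \<bullet> (z \<times> x)) *\<^sub>R y + (r \<bullet> (x \<times> y)) *\<^sub>R z"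
  by (simp add: cross3_simps forall_3)
lemma ax: "(x::real^3) \<times> axis 1 1 = 0 \<Longrightarrow> x \<times> axis 2 1 = 0 \<Longrightarrow> x = 0"
  by (simp add: cross3_simps forall_3 axis_def)
lemma cyc: "z \<bullet> (x \<times> y) = x \<bullet> (y \<times> (z::real^3))"
  by (simp add: cross3_simps forall_3)

lemma perp_par:
  fixes x y u :: "real^3"
  assumes "u \<bullet> x = 0" "u \<bullet> y = 0"
  shows "((x \<times> y) \<bullet> (x \<times> y)) *\<^sub>R u = ((x \<times> y) \<bullet> u) *\<^sub>R (x \<times> y)"
proof -
  have "(x \<times> y) \<times> u = 0"
    using id1[of u x y] assms cross_skew[of "x \<times> y" u] by (simp add: inner_commute)
  then have "(x \<times> y) \<times> ((x \<times> y) \<times> u) = 0" by simp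
  then show ?thesis using id1[of "x \<times> y" "x \<times> y" u] by simp
qed

lemma perp_pm:
  fixes m n u v :: "real^3"
  assumes c: "m \<times> n \<noteq> 0" and u: "u \<in> S2" and v: "v \<in> S2"
    and "u \<bullet> m = 0" "u \<bullet> n = 0" "v \<bullet> m = 0" "v \<bullet> n = 0"
  shows "u = v \<or> u = - v"
proof -
  define c where "c = m \<times> n"
  have cc: "c \<bullet> c > 0" using assms(1) c_def by simp
  define l where "l = (c \<bullet> u) / (c \<bullet> c)"
  define k where "k = (c \<bullet> v) / (c \<bullet> c)"
  have ul: "u = l *\<^sub>R c"
  proof -
    have "u = (1/(c \<bullet> c)) *\<^sub>R ((c \<bullet> c) *\<^sub>R u)" using cc by simp
    also have "\<dots> = l *\<^sub>R c" using perp_par[of u m n] assms unfolding c_def l_def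
      by (simp add: inner_commute)
    finally show ?thesis .
  qed
  have vk: "v = k *\<^sub>R c"
  proof -
    have "v = (1/(c \<bullet> c)) *\<^sub>R ((c \<bullet> c) *\<^sub>R v)" using cc by simp
    also have "\<dots> = k *\<^sub>R c" using perp_par[of v m n] assms unfolding c_def k_def
      by (simp add: inner_commute)
    finally show ?thesis .
  qed
  have "norm u = 1" "norm v = 1" using u v by auto
  then have "\<bar>l\<bar> * norm c = \<bar>k\<bar> * norm c" using ul vk by simp
  then have "\<bar>l\<bar> = \<bar>k\<bar>" using c c_def by simp
  then have "l = k \<or> l = - k" by linarith
  then show ?thesis using ul vk by auto
qed

lemma sgn_unit: "x \<in> S2 \<Longrightarrow> sgn x = x"
  by (simp add: sgn_div_norm)

lemma arc_ends:
  assumes "valid_arc a" shows "fst a \<in> arc_set a" "snd a \<in> arc_set a"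
proof -
  have "fst a = sgn ((1 - 0) *\<^sub>R fst a + 0 *\<^sub>R snd a)"
    using assms sgn_unit[of "fst a"] unfolding valid_arc_def by simp
  then show "fst a \<in> arc_set a" unfolding arc_set_def by (intro CollectI exI[of _ 0]) simp
  have "snd a = sgn ((1 - 1) *\<^sub>R fst a + 1 *\<^sub>R snd a)"
    using assms sgn_unit[of "snd a"] unfolding valid_arc_def by simp
  then show "snd a \<in> arc_set a" unfolding arc_set_def by (intro CollectI exI[of _ 1]) simp
qed

lemma chord_nz:
  assumes "valid_arc a" "0 \<le> t" "t \<le> 1"
  shows "(1 - t) *\<^sub>R fst a + t *\<^sub>R snd a \<noteq> 0"
proof
  assume h: "(1 - t) *\<^sub>R fst a + t *\<^sub>R snd a = 0"
  then have e: "(1 - t) *\<^sub>R fst a = - (t *\<^sub>R snd a)" by (simp add: eq_neg_iff_add_eq_0)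
  have n1: "norm (fst a) = 1" "norm (snd a) = 1" using assms unfolding valid_arc_def by auto
  have "norm ((1 - t) *\<^sub>R fst a) = norm (t *\<^sub>R snd a)" using e by simp
  then have "1 - t = t" using n1 assms by simp
  then have "t = 1/2" by simp
  have "fst a = (2::real) *\<^sub>R ((1 - 1/2) *\<^sub>R fst a)" by simp
  also have "\<dots> = (2::real) *\<^sub>R (- ((1/2) *\<^sub>R snd a))" using e \<open>t = 1/2\<close> by simp
  also have "\<dots> = - snd a" by simp
  finally have "fst a = - snd a" .
  then show False using assms unfolding valid_arc_def by simp
qed

lemma strict_norm:
  fixes x y :: "real^3"
  assumes "x \<in> S2" "y \<in> S2" "x \<noteq> y" "0 < s" "s < 1"
  shows "norm ((1 - s) *\<^sub>R x + s *\<^sub>R y) < 1"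
proof -
  have xx: "x \<bullet> x = 1" "y \<bullet> y = 1" using assms by (auto simp: dot_square_norm)
  have "0 < (x - y) \<bullet> (x - y)" using assms(3) by simp
  then have xy: "x \<bullet> y < 1" using xx by (simp add: inner_diff inner_commute)
  have "((1 - s) *\<^sub>R x + s *\<^sub>R y) \<bullet> ((1 - s) *\<^sub>R x + s *\<^sub>R y)
     = (1 - s)^2 + s^2 + 2 * s * (1 - s) * (x \<bullet> y)"
    using xx by (simp add: inner_add inner_commute power2_eq_square algebra_simps)
  also have "\<dots> < ((1 - s) + s)^2"
  proof -
    have "2 * s * (1 - s) * (x \<bullet> y) < 2 * s * (1 - s)" using xy assms by simp
    then show ?thesis by (simp add: power2_eq_square algebra_simps)
  qed
  finally have "(norm ((1 - s) *\<^sub>R x + s *\<^sub>R y))^2 < 1" by (simp add: power2_norm_eq_inner)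
  then show ?thesis by (simp add: abs_square_less_1)
qed

lemma not_own:
  assumes "valid_arc a" shows "fst a \<notin> arc_relint a"
proof
  assume "fst a \<in> arc_relint a"
  then obtain s where s: "0 < s" "s < 1" and e: "fst a = sgn ((1 - s) *\<^sub>R fst a + s *\<^sub>R snd a)"
    unfolding arc_relint_def by auto
  define w where "w = (1 - s) *\<^sub>R fst a + s *\<^sub>R snd a"
  have wnz: "w \<noteq> 0" using chord_nz[OF assms, of s] s w_def by simp
  have "w = norm w *\<^sub>R fst a" using e wnz unfolding w_def[symmetric] by (simp add: sgn_div_norm)
  then have "s *\<^sub>R snd a = (norm w - (1 - s)) *\<^sub>R fst a" unfolding w_def
    by (simp add: algebra_simps)
  then have sa: "snd a = ((norm w - (1 - s)) / s) *\<^sub>R fst a"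
  proof -
    assume h: "s *\<^sub>R snd a = (norm w - (1 - s)) *\<^sub>R fst a"
    have "snd a = (1/s) *\<^sub>R (s *\<^sub>R snd a)" using s by simp
    also have "\<dots> = ((norm w - (1 - s)) / s) *\<^sub>R fst a" using h by simp
    finally show ?thesis .
  qed
  have n1: "norm (fst a) = 1" "norm (snd a) = 1" using assms unfolding valid_arc_def by auto
  then have "\<bar>(norm w - (1 - s)) / s\<bar> = 1" using sa by (metis norm_scaleR mult.right_neutral real_norm_def)
  then have "(norm w - (1 - s)) / s = 1 \<or> (norm w - (1 - s)) / s = -1" by linarith
  then show False using sa assms unfolding valid_arc_def by auto
qed

lemma arc_set_swap: "arc_set (b, a) = arc_set (a, b)"
proof -
  have e: "\<And>t. (1 - t) *\<^sub>R b + t *\<^sub>R a = (1 - (1 - t)) *\<^sub>R a + (1 - t) *\<^sub>R b"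
    "\<And>t. (1 - t) *\<^sub>R a + t *\<^sub>R b = (1 - (1 - t)) *\<^sub>R b + (1 - t) *\<^sub>R a" by (simp_all add: algebra_simps)
  show ?thesis unfolding arc_set_def
  proof (intro set_eqI iffI)
    fix x assume "x \<in> {sgn ((1 - t) *\<^sub>R fst (b, a) + t *\<^sub>R snd (b, a)) |t. 0 \<le> t \<and> t \<le> 1}"
    then obtain t where "x = sgn ((1 - t) *\<^sub>R b + t *\<^sub>R a)" "0 \<le> t" "t \<le> 1" by auto
    then show "x \<in> {sgn ((1 - t) *\<^sub>R fst (a, b) + t *\<^sub>R snd (a, b)) |t. 0 \<le> t \<and> t \<le> 1}"
      using e(1)[of t] by (intro CollectI exI[of _ "1 - t"]) simp
  next
    fix x assume "x \<in> {sgn ((1 - t) *\<^sub>R fst (a, b) + t *\<^sub>R snd (a, b)) |t. 0 \<le> t \<and> t \<le> 1}"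
    then obtain t where "x = sgn ((1 - t) *\<^sub>R a + t *\<^sub>R b)" "0 \<le> t" "t \<le> 1" by auto
    then show "x \<in> {sgn ((1 - t) *\<^sub>R fst (b, a) + t *\<^sub>R snd (b, a)) |t. 0 \<le> t \<and> t \<le> 1}"
      using e(2)[of t] by (intro CollectI exI[of _ "1 - t"]) simp
  qed
qed

lemma sign_pres:
  assumes va: "valid_arc a" and m: "m \<noteq> 0" and sub: "arc_set a \<subseteq> great_circle m"
    and p: "p \<in> S2" "m \<bullet> p = 0" "n \<bullet> p = 0" "p \<notin> arc_set a" "- p \<notin> arc_set a"
    and h1: "n \<bullet> fst a > 0"
  shows "n \<bullet> snd a > 0"
proof (rule ccontr)
  assume "\<not> n \<bullet> snd a > 0"
  then have h2: "n \<bullet> snd a \<le> 0" by simp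
  define t where "t = (n \<bullet> fst a) / (n \<bullet> fst a - n \<bullet> snd a)"
  have t: "0 \<le> t" "t \<le> 1" using h1 h2 unfolding t_def by (auto simp: field_simps)
  define w where "w = (1 - t) *\<^sub>R fst a + t *\<^sub>R snd a"
  have wnz: "w \<noteq> 0" using chord_nz[OF va t] w_def by simp
  have "n \<bullet> w = (1 - t) * (n \<bullet> fst a) + t * (n \<bullet> snd a)" unfolding w_def by (simp add: inner_add)
  also have "\<dots> = 0" using h1 h2 unfolding t_def by (simp add: field_simps)
  finally have nw: "n \<bullet> w = 0" .
  have ma: "m \<bullet> fst a = 0" "m \<bullet> snd a = 0" using arc_ends[OF va] sub unfolding great_circle_def by auto
  have mw: "m \<bullet> w = 0" unfolding w_def using ma by (simp add: inner_add)
  have sw: "sgn w \<in> arc_set a" unfolding arc_set_def w_def using t by auto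
  have mn: "m \<times> n \<noteq> 0"
  proof
    assume "m \<times> n = 0"
    then have "(m \<bullet> n) *\<^sub>R m = (m \<bullet> m) *\<^sub>R n" using id1[of m m n] by simp
    then have "(m \<bullet> n) * (m \<bullet> fst a) = (m \<bullet> m) * (n \<bullet> fst a)"
      by (metis inner_scaleR_left)
    then have "(m \<bullet> m) * (n \<bullet> fst a) = 0" using ma by simp
    then show False using m h1 by simp
  qed
  have "sgn w \<in> S2" using wnz by (simp add: norm_sgn)
  moreover have "sgn w \<bullet> m = 0" "sgn w \<bullet> n = 0" using mw nw
    by (auto simp: sgn_div_norm inner_commute)
  ultimately have "sgn w = p \<or> sgn w = - p"
    using perp_pm[OF mn, of "sgn w" p] p by (simp add: inner_commute)
  then show False using sw p by auto
qed
lemma both_pos: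
  assumes OR: "oriented_by D k P f" and bD: "b \<in> D" and vb: "valid_arc b"
    and Pn: "\<forall>p\<in>P. n \<bullet> p = 0" and h: "n \<bullet> fst b > 0 \<or> n \<bullet> snd b > 0"
  shows "n \<bullet> fst b > 0 \<and> n \<bullet> snd b > 0"
proof -
  obtain m where m: "m \<noteq> 0" "arc_set b \<subseteq> great_circle m" "f b \<in> great_circle m"
    and fP: "f b \<in> P" and nf: "f b \<notin> arc_set b" "- f b \<notin> arc_set b"
    using OR bD unfolding oriented_by_def by blast
  have fS: "f b \<in> S2" using OR fP unfolding oriented_by_def by auto
  have mf: "m \<bullet> f b = 0" using m(3) unfolding great_circle_def by auto
  have nf0: "n \<bullet> f b = 0" using Pn fP by auto
  have sw: "arc_set (snd b, fst b) = arc_set b"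
    using arc_set_swap[of "snd b" "fst b"] by simp
  have vs: "valid_arc (snd b, fst b)" using vb unfolding valid_arc_def by auto
  show ?thesis
  proof (cases "n \<bullet> fst b > 0")
    case True
    then show ?thesis using sign_pres[OF vb m(1) m(2) fS mf nf0 nf] by simp
  next
    case False
    then have "n \<bullet> snd b > 0" using h by simp
    moreover have "n \<bullet> snd (snd b, fst b) > 0"
      by (rule sign_pres[OF vs m(1) _ fS mf nf0]) (use m(2) nf sw \<open>n \<bullet> snd b > 0\<close> in auto)
    ultimately show ?thesis by simp
  qed
qed

lemma caseA:
  assumes SD: "spherical_diagram D" and OR: "oriented_by D k P f"
    and Pn: "\<forall>p\<in>P. n \<bullet> p = 0" and ex: "\<exists>a\<in>D. n \<bullet> fst a > 0 \<or> n \<bullet> snd a > 0"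
  shows False
proof -
  have fin: "finite D" and va: "\<forall>a\<in>D. valid_arc a"
    and bl: "\<forall>a\<in>D. (\<exists>b\<in>D. fst a \<in> arc_relint b) \<and> (\<exists>b\<in>D. snd a \<in> arc_relint b)"
    using SD unfolding spherical_diagram_def by auto
  define E where "E = (fst ` D \<union> snd ` D) \<inter> {x. n \<bullet> x > 0}"
  have finE: "finite E" unfolding E_def using fin by auto
  have neE: "E \<noteq> {}" using ex unfolding E_def by auto
  define mu where "mu = Min ((\<lambda>x. n \<bullet> x) ` E)"
  have "mu \<in> (\<lambda>x. n \<bullet> x) ` E" unfolding mu_def using finE neE by (intro Min_in) auto
  then obtain e where eE: "e \<in> E" and emu: "n \<bullet> e = mu" by auto
  have mule: "\<And>x. x \<in> E \<Longrightarrow> mu \<le> n \<bullet> x" unfolding mu_def using finE by auto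
  have epos: "n \<bullet> e > 0" using eE unfolding E_def by auto
  obtain b where bD: "b \<in> D" and eb: "e \<in> arc_relint b"
    using eE bl unfolding E_def by auto
  have vb: "valid_arc b" using va bD by auto
  obtain s where s: "0 < s" "s < 1" and es: "e = sgn ((1 - s) *\<^sub>R fst b + s *\<^sub>R snd b)"
    using eb unfolding arc_relint_def by auto
  define w where "w = (1 - s) *\<^sub>R fst b + s *\<^sub>R snd b"
  have wnz: "w \<noteq> 0" using chord_nz[OF vb, of s] s w_def by simp
  have ne: "n \<bullet> e = (n \<bullet> w) / norm w" using es unfolding w_def[symmetric]
    by (simp add: sgn_div_norm divide_inverse_commute)
  have nwpos: "n \<bullet> w > 0" using ne epos wnz
    by (simp add: zero_less_divide_iff)
  have nw: "n \<bullet> w = (1 - s) * (n \<bullet> fst b) + s * (n \<bullet> snd b)"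
    unfolding w_def by (simp add: inner_add)
  have "n \<bullet> fst b > 0 \<or> n \<bullet> snd b > 0"
  proof (rule ccontr)
    assume "\<not> ?thesis"
    then have "(1 - s) * (n \<bullet> fst b) \<le> 0" "s * (n \<bullet> snd b) \<le> 0" using s
      by (simp_all add: mult_nonneg_nonpos)
    then show False using nwpos nw by simp
  qed
  then have bp: "n \<bullet> fst b > 0" "n \<bullet> snd b > 0" using both_pos[OF OR bD vb Pn] by auto
  then have "fst b \<in> E" "snd b \<in> E" unfolding E_def using bD by auto
  then have "mu \<le> n \<bullet> fst b" "mu \<le> n \<bullet> snd b" using mule by auto
  then have "(1 - s) * mu \<le> (1 - s) * (n \<bullet> fst b)" "s * mu \<le> s * (n \<bullet> snd b)" using s
    by (simp_all add: mult_left_mono)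
  then have muw: "mu \<le> n \<bullet> w" using nw by (simp add: algebra_simps)
  have nwl: "norm w < 1" unfolding w_def
    using strict_norm[of "fst b" "snd b" s] vb s unfolding valid_arc_def by auto
  have nwp: "norm w > 0" using wnz by simp
  have "n \<bullet> w < (n \<bullet> w) / norm w" using nwl nwp nwpos by (simp add: less_divide_eq)
  then have "mu < n \<bullet> e" using ne muw by simp
  then show False using emu by simp
qed

lemma caseB:
  assumes SD: "spherical_diagram D" and n0: "n \<noteq> 0"
    and all: "\<forall>a\<in>D. n \<bullet> fst a = 0 \<and> n \<bullet> snd a = 0"
  shows False
proof -
  have ne: "D \<noteq> {}" and va: "\<forall>a\<in>D. valid_arc a"
    and dj: "\<forall>a\<in>D. \<forall>b\<in>D. a \<noteq> b \<longrightarrow> arc_relint a \<inter> arc_relint b = {}"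
    and bl: "\<forall>a\<in>D. (\<exists>b\<in>D. fst a \<in> arc_relint b) \<and> (\<exists>b\<in>D. snd a \<in> arc_relint b)"
    using SD unfolding spherical_diagram_def by auto
  obtain a where aD: "a \<in> D" using ne by auto
  obtain b where bD: "b \<in> D" and eb: "fst a \<in> arc_relint b" using bl aD by auto
  have vaa: "valid_arc a" and vb: "valid_arc b" using va aD bD by auto
  have ab: "a \<noteq> b" using not_own[OF vaa] eb by auto
  obtain s where s: "0 < s" "s < 1" and es: "fst a = sgn ((1 - s) *\<^sub>R fst b + s *\<^sub>R snd b)"
    using eb unfolding arc_relint_def by auto
  define w where "w = (1 - s) *\<^sub>R fst b + s *\<^sub>R snd b"
  have wnz: "w \<noteq> 0" using chord_nz[OF vb, of s] s w_def by simp
  define \<rho> where "\<rho> = norm w"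
  have rp: "\<rho> > 0" using wnz \<rho>_def by simp
  have ew: "fst a = (1 / \<rho>) *\<^sub>R ((1 - s) *\<^sub>R fst b + s *\<^sub>R snd b)"
    using es unfolding \<rho>_def w_def by (simp add: sgn_div_norm divide_inverse_commute)
  define c where "c = fst b \<times> snd b"
  have b1: "fst b \<bullet> fst b = 1" "snd b \<bullet> snd b = 1" using vb unfolding valid_arc_def
    by (auto simp: dot_square_norm)
  have cnz: "c \<noteq> 0"
  proof
    assume "c = 0"
    then have "(fst b \<bullet> snd b)^2 = 1" using norm_cross_dot[of "fst b" "snd b"] vb
      unfolding c_def valid_arc_def by simp
    then have "fst b \<bullet> snd b = 1 \<or> fst b \<bullet> snd b = -1"
      by (simp add: power2_eq_1_iff)
    then show False
    proof
      assume h: "fst b \<bullet> snd b = 1"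
      have "(fst b - snd b) \<bullet> (fst b - snd b) = 0" using h b1 by (simp add: inner_diff inner_commute)
      then show False using vb unfolding valid_arc_def by simp
    next
      assume h: "fst b \<bullet> snd b = -1"
      have "(fst b + snd b) \<bullet> (fst b + snd b) = 0" using h b1 by (simp add: inner_add inner_commute)
      then have "fst b = - snd b" by (simp add: eq_neg_iff_add_eq_0)
      then show False using vb unfolding valid_arc_def by simp
    qed
  qed
  have cc: "c \<bullet> c > 0" using cnz by simp
  have nb: "n \<bullet> fst b = 0" "n \<bullet> snd b = 0" "n \<bullet> snd a = 0" using all aD bD by auto
  have cn: "(c \<bullet> c) *\<^sub>R n = (c \<bullet> n) *\<^sub>R c" using perp_par[of n "fst b" "snd b"] nb unfolding c_def by simp
  have cn0: "c \<bullet> n \<noteq> 0"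
  proof
    assume "c \<bullet> n = 0"
    then have "(c \<bullet> c) *\<^sub>R n = 0" using cn by simp
    then show False using cc n0 by simp
  qed
  have "snd a \<bullet> ((c \<bullet> c) *\<^sub>R n) = snd a \<bullet> ((c \<bullet> n) *\<^sub>R c)" using cn by simp
  then have "(c \<bullet> n) * (snd a \<bullet> c) = 0" using nb by (simp add: inner_commute)
  then have a2c: "snd a \<bullet> c = 0" using cn0 by simp
  define \<alpha> where "\<alpha> = ((snd a \<times> snd b) \<bullet> c) / (c \<bullet> c)"
  define \<beta> where "\<beta> = ((fst b \<times> snd a) \<bullet> c) / (c \<bullet> c)"
  have a2: "snd a = \<alpha> *\<^sub>R fst b + \<beta> *\<^sub>R snd b"
  proof -
    have "snd a = (1 / (c \<bullet> c)) *\<^sub>R ((c \<bullet> c) *\<^sub>R snd a)" using cc by simp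
    also have "\<dots> = \<alpha> *\<^sub>R fst b + \<beta> *\<^sub>R snd b"
      using id2[of "fst b" "snd b" "snd a"] a2c unfolding c_def[symmetric] \<alpha>_def \<beta>_def
      by (simp add: scaleR_add_right divide_inverse_commute)
    finally show ?thesis .
  qed
  define K where "K = \<rho> * (\<bar>\<alpha>\<bar> + \<bar>\<beta>\<bar>) + 1"
  have K1: "K \<ge> 1" unfolding K_def using rp by simp
  define t where "t = min (1 - s) s / (2 * K)"
  have t0: "t > 0" unfolding t_def using s K1 by simp
  have tK: "t * K \<le> (1 - s) / 2" "t * K \<le> s / 2" unfolding t_def using K1 by (auto simp: field_simps)
  have t1: "t < 1"
  proof -
    have "t \<le> t * K" using K1 t0 by simp
    then show ?thesis using tK s by linarith
  qed
  define L where "L = (1 - t) * (1 - s) / \<rho> + t * \<alpha>"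
  define M where "M = (1 - t) * s / \<rho> + t * \<beta>"
  have tKe: "t * K = t * \<rho> * \<bar>\<alpha>\<bar> + t * \<rho> * \<bar>\<beta>\<bar> + t" unfolding K_def by (simp add: algebra_simps)
  have ta: "t * \<rho> * \<alpha> \<ge> - (t * \<rho> * \<bar>\<alpha>\<bar>)" "t * \<rho> * \<beta> \<ge> - (t * \<rho> * \<bar>\<beta>\<bar>)"
    using t0 rp by (auto simp: mult_le_cancel_left_pos abs_ge_minus_self
        intro: mult_left_mono[of "-\<bar>_\<bar>" _ "t * \<rho>", simplified])
  have tbs: "t * \<rho> * \<bar>\<alpha>\<bar> \<ge> 0" "t * \<rho> * \<bar>\<beta>\<bar> \<ge> 0" using t0 rp by auto
  have ts: "t * (1 - s) \<le> t" "t * s \<le> t" using t0 s by (auto simp: mult_left_le)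
  have Lp: "\<rho> * L > 0"
  proof -
    have "\<rho> * L = (1 - t) * (1 - s) + t * \<rho> * \<alpha>" unfolding L_def using rp by (simp add: field_simps)
    then show ?thesis using tK tKe ta tbs ts s by (simp add: algebra_simps; linarith)
  qed
  have Mp: "\<rho> * M > 0"
  proof -
    have "\<rho> * M = (1 - t) * s + t * \<rho> * \<beta>" unfolding M_def using rp by (simp add: field_simps)
    then show ?thesis using tK tKe ta tbs ts s by (simp add: algebra_simps; linarith)
  qed
  have L0: "L > 0" and M0: "M > 0" using Lp Mp rp by (simp_all add: zero_less_mult_iff)
  have vec: "(1 - t) *\<^sub>R fst a + t *\<^sub>R snd a = L *\<^sub>R fst b + M *\<^sub>R snd b"
  proof -
    have "(1 - t) *\<^sub>R fst a + t *\<^sub>R snd a = ((1 - t) * (1 - s) / \<rho>) *\<^sub>R fst b + ((1 - t) * s / \<rho>) *\<^sub>R snd b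
       + (t * \<alpha>) *\<^sub>R fst b + (t * \<beta>) *\<^sub>R snd b"
      unfolding ew a2 by (simp add: scaleR_add_right)
    also have "\<dots> = L *\<^sub>R fst b + M *\<^sub>R snd b" unfolding L_def M_def by (simp add: scaleR_add_left)
    finally show ?thesis .
  qed
  define u where "u = M / (L + M)"
  have u: "0 < u" "u < 1" unfolding u_def using L0 M0 by auto
  have vec2: "L *\<^sub>R fst b + M *\<^sub>R snd b = (L + M) *\<^sub>R ((1 - u) *\<^sub>R fst b + u *\<^sub>R snd b)"
  proof -
    have "(L + M) * (1 - u) = L" "(L + M) * u = M" unfolding u_def using L0 M0 by (auto simp: field_simps)
    then show ?thesis by (simp add: scaleR_add_right)
  qed
  define q where "q = sgn ((1 - t) *\<^sub>R fst a + t *\<^sub>R snd a)"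
  have qa: "q \<in> arc_relint a" unfolding q_def arc_relint_def using t0 t1 by auto
  have "q = sgn ((1 - u) *\<^sub>R fst b + u *\<^sub>R snd b)" unfolding q_def vec vec2 sgn_scaleR
    using L0 M0 by simp
  then have qb: "q \<in> arc_relint b" unfolding arc_relint_def using u by auto
  show False using dj aD bD ab qa qb by blast
qed

lemma interior_part:
  assumes PS: "P \<subseteq> S2" and sp: "\<forall>n. n \<noteq> 0 \<longrightarrow> (\<exists>p\<in>P. n \<bullet> p \<noteq> 0)"
    and att: "attractor P A"
  shows "sphere_interior (spherical_hull A) \<noteq> {}"
proof -
  have Asp: "\<exists>x\<in>A. n \<bullet> x \<noteq> 0" if n0: "n \<noteq> 0" for n
  proof -
    obtain p where p: "p \<in> P" "n \<bullet> p \<noteq> 0" using sp n0 by blast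
    have "(p \<in> A) \<noteq> (- p \<in> A)" using att p unfolding attractor_def by auto
    then have "p \<in> A \<or> - p \<in> A" by auto
    then show ?thesis using p by (metis inner_minus_right neg_equal_0_iff_equal)
  qed
  have AS: "A \<subseteq> S2"
  proof
    fix x assume "x \<in> A"
    then have "x \<in> P \<union> uminus ` P" using att unfolding attractor_def by auto
    then show "x \<in> S2" using PS by auto
  qed
  obtain x where xA: "x \<in> A" using Asp[of "axis 1 1"] by (auto simp: axis_eq_0_iff)
  have x0: "x \<noteq> 0" using xA AS by auto
  obtain v where v: "x \<times> v \<noteq> 0" using ax[of x] x0 by blast
  obtain y where yA: "y \<in> A" and yv: "(x \<times> v) \<bullet> y \<noteq> 0" using Asp[OF v] by auto
  have xy: "x \<times> y \<noteq> 0"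
  proof
    assume "x \<times> y = 0"
    then have "(x \<bullet> x) *\<^sub>R y = (x \<bullet> y) *\<^sub>R x" using id1[of x x y] by simp
    then have "(x \<times> v) \<bullet> ((x \<bullet> x) *\<^sub>R y) = (x \<times> v) \<bullet> ((x \<bullet> y) *\<^sub>R x)" by simp
    then have "(x \<bullet> x) * ((x \<times> v) \<bullet> y) = 0" by (simp add: dot_cross_self)
    then show False using x0 yv by simp
  qed
  obtain z where zA: "z \<in> A" and zxy: "(x \<times> y) \<bullet> z \<noteq> 0" using Asp[OF xy] by auto
  define d where "d = x \<bullet> (y \<times> z)"
  have d0: "d \<noteq> 0" using zxy cyc[of z x y] unfolding d_def by (simp add: inner_commute)
  define W where "W = {r. 0 < d * (r \<bullet> (y \<times> z)) \<and> 0 < d * (r \<bullet> (z \<times> x)) \<and> 0 < d * (r \<bullet> (x \<times> y))}"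
  have oW: "open W" unfolding W_def
    by (intro open_Collect_conj open_Collect_less continuous_intros)
  define q0 where "q0 = x + y + z"
  have q0d: "q0 \<bullet> (y \<times> z) = d" "q0 \<bullet> (z \<times> x) = d" "q0 \<bullet> (x \<times> y) = d"
    unfolding q0_def d_def by (simp_all add: cross3_simps)
  have q00: "q0 \<noteq> 0" using q0d d0 by auto
  define q where "q = sgn q0"
  have qS: "q \<in> S2" using q00 unfolding q_def by (simp add: norm_sgn)
  have qW: "q \<in> W"
  proof -
    have np: "norm q0 > 0" using q00 by simp
    have "d * (q \<bullet> (y \<times> z)) = d * d / norm q0" "d * (q \<bullet> (z \<times> x)) = d * d / norm q0"
      "d * (q \<bullet> (x \<times> y)) = d * d / norm q0"
      unfolding q_def using q0d by (simp_all add: sgn_div_norm divide_inverse_commute)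
    moreover have "d * d / norm q0 > 0" using d0 np by (intro divide_pos_pos) (use d0 in \<open>auto simp: zero_less_mult_iff linorder_neq_iff\<close>)
    ultimately show ?thesis unfolding W_def by simp
  qed
  have sub: "S2 \<inter> W \<subseteq> spherical_hull A"
  proof
    fix r assume r: "r \<in> S2 \<inter> W"
    show "r \<in> spherical_hull A"
    proof (cases "in_open_hemisphere A")
      case False
      then show ?thesis using r unfolding spherical_hull_def by simp
    next
      case True
      define l1 where "l1 = (r \<bullet> (y \<times> z)) / d"
      define l2 where "l2 = (r \<bullet> (z \<times> x)) / d"
      define l3 where "l3 = (r \<bullet> (x \<times> y)) / d"
      have lp: "l1 > 0" "l2 > 0" "l3 > 0" using r unfolding W_def l1_def l2_def l3_def
        by (auto simp: zero_less_mult_iff zero_less_divide_iff)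
      have rl: "r = l1 *\<^sub>R x + l2 *\<^sub>R y + l3 *\<^sub>R z"
      proof -
        have "r = (1 / d) *\<^sub>R (d *\<^sub>R r)" using d0 by simp
        also have "\<dots> = l1 *\<^sub>R x + l2 *\<^sub>R y + l3 *\<^sub>R z"
          unfolding l1_def l2_def l3_def d_def id4[of x y z r]
          by (simp add: scaleR_add_right divide_inverse_commute)
        finally show ?thesis .
      qed
      define T where "T = l1 + l2 + l3"
      have T0: "T > 0" using lp T_def by simp
      define y' where "y' = (l1 / T) *\<^sub>R x + (l2 / T) *\<^sub>R y + (l3 / T) *\<^sub>R z"
      have "y' \<in> convex hull {x, y, z}" unfolding convex_hull_3 y'_def
        using lp T0 by (intro CollectI exI[of _ "l1 / T"] exI[of _ "l2 / T"] exI[of _ "l3 / T"])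
          (auto simp: T_def add_divide_distrib[symmetric])
      moreover have "convex hull {x, y, z} \<subseteq> convex hull A" using xA yA zA by (intro hull_mono) auto
      ultimately have yh: "y' \<in> convex hull A" by auto
      have "r = T *\<^sub>R y'" unfolding y'_def rl using T0 by (simp add: scaleR_add_right)
      then show ?thesis using True r yh T0 unfolding spherical_hull_def by auto
    qed
  qed
  have "S2 \<inter> W \<subseteq> sphere_interior (spherical_hull A)"
    unfolding sphere_interior_def by (rule interior_of_maximal[OF sub]) (simp add: openin_open_Int oW)
  then show ?thesis using qS qW by auto
qed

theorem mainTheorem13:
  assumes "spherical_diagram D" and "oriented_by D k P f"
  shows "\<not> (\<exists>n::real^3. n \<noteq> 0 \<and> P \<subseteq> great_circle n) \<and>
         (\<forall>A. attractor P A \<longrightarrow> sphere_interior (spherical_hull A) \<noteq> {})"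
proof -
  have PS: "P \<subseteq> S2" using assms(2) unfolding oriented_by_def by auto
  have part1: "\<not> (\<exists>n::real^3. n \<noteq> 0 \<and> P \<subseteq> great_circle n)"
  proof
    assume "\<exists>n::real^3. n \<noteq> 0 \<and> P \<subseteq> great_circle n"
    then obtain n :: "real^3" where n0: "n \<noteq> 0" and Pg: "P \<subseteq> great_circle n" by auto
    have Pn: "\<forall>p\<in>P. n \<bullet> p = 0" using Pg unfolding great_circle_def by auto
    have Pn': "\<forall>p\<in>P. (- n) \<bullet> p = 0" using Pn by simp
    show False
    proof (cases "\<forall>a\<in>D. n \<bullet> fst a = 0 \<and> n \<bullet> snd a = 0")
      case True
      then show False using caseB[OF assms(1) n0] by simp
    next
      case False
      then obtain a where aD: "a \<in> D" and h: "n \<bullet> fst a \<noteq> 0 \<or> n \<bullet> snd a \<noteq> 0" by auto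
      then have "(n \<bullet> fst a > 0 \<or> n \<bullet> snd a > 0) \<or> ((- n) \<bullet> fst a > 0 \<or> (- n) \<bullet> snd a > 0)"
        by auto
      then show False
      proof
        assume "n \<bullet> fst a > 0 \<or> n \<bullet> snd a > 0"
        then show False using caseA[OF assms Pn] aD by blast
      next
        assume "(- n) \<bullet> fst a > 0 \<or> (- n) \<bullet> snd a > 0"
        then show False using caseA[OF assms Pn'] aD by blast
      qed
    qed
  qed
  have sp: "\<forall>n. n \<noteq> 0 \<longrightarrow> (\<exists>p\<in>P. n \<bullet> p \<noteq> 0)"
  proof (intro allI impI)
    fix n :: "real^3" assume n0: "n \<noteq> 0"
    show "\<exists>p\<in>P. n \<bullet> p \<noteq> 0"
    proof (rule ccontr)
      assume "\<not> ?thesis"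
      then have "P \<subseteq> great_circle n" using PS unfolding great_circle_def by auto
      then show False using part1 n0 by auto
    qed
  qed
  show ?thesis using part1 interior_part[OF PS sp] by auto
qed

end
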